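(* Stutter-equivalence of teams has the following properties: (1) If $T$ is a stutter-free team, then $T=T[f]$ for every stuttering function $f$ of $T$. (2) For every team $T$ there is a unique stutter-free team that is stutter-equivalent to $T$. (3) Stutter-equivalence $\equiv_{\mathrm{st}}$ is reflexive, symmetric and transitive on teams. (4) Every $\equiv_{\mathrm{st}}$-equivalence class contains exactly one stutter-free team.
   Context: A trace is an infinite sequence $t=t(0)t(1)\cdots$ of subsets of a set $\mathrm{AP}$ of propositions; a team is a set of traces. A stuttering function of a trace $t$ is a strictly increasing function $f:\mathbb N\to\mathbb N$ with $f(0)=0$ such that $t(f(k))=t(f(k)+1)=\cdots=t(f(k+1)-1)$ for all $k\ge0$. A stuttering function of a team $T$ is a function that is a stuttering function of every $t\in T$. For $f:\mathbb N\to\mathbb N$, $t[f]:=t(f(0))t(f(1))t(f(2))\cdots$ and $T[f]:=\{t[f]:t\in T\}$. Teams $T,T'$ are stutter-equivalent ($T\equiv_{\mathrm{st}}T'$) if there are a stuttering function $f$ of $T$ and a stuttering function $f'$ of $T'$ with $T[f]=T'[f']$. A team $T$ has a stuttering position $i$ if $t(i)=t(i+1)$ for all $t\in T$, but there exist $t\in T$ and $j>i+1$ with $t(i)\neq t(j)$. A team with no stuttering position is stutter-free. *)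

theory Defs
  imports Main
begin

text \<open>Atomic propositions are the elements of the type 'a (AP = UNIV).
  A trace is an infinite sequence of subsets of AP; a team is a set of traces.\<close>

type_synonym 'a trace = "nat \<Rightarrow> 'a set"
type_synonym 'a team = "'a trace set"

definition stuttering_fun :: "'a trace \<Rightarrow> (nat \<Rightarrow> nat) \<Rightarrow> bool" where
  "stuttering_fun t f \<longleftrightarrow> strict_mono f \<and> f 0 = 0 \<and>
     (\<forall>k i. f k \<le> i \<and> i < f (Suc k) \<longrightarrow> t i = t (f k))"

definition team_stuttering_fun :: "'a team \<Rightarrow> (nat \<Rightarrow> nat) \<Rightarrow> bool" where
  "team_stuttering_fun T f \<longleftrightarrow> (\<forall>t\<in>T. stuttering_fun t f)"

definition trace_at :: "'a trace \<Rightarrow> (nat \<Rightarrow> nat) \<Rightarrow> 'a trace" where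
  "trace_at t f = (\<lambda>k. t (f k))"

definition team_at :: "'a team \<Rightarrow> (nat \<Rightarrow> nat) \<Rightarrow> 'a team" where
  "team_at T f = (\<lambda>t. trace_at t f) ` T"

definition stutter_equiv :: "'a team \<Rightarrow> 'a team \<Rightarrow> bool" where
  "stutter_equiv T T' \<longleftrightarrow> (\<exists>f f'. team_stuttering_fun T f \<and> team_stuttering_fun T' f' \<and>
      team_at T f = team_at T' f')"

definition stuttering_position :: "'a team \<Rightarrow> nat \<Rightarrow> bool" where
  "stuttering_position T i \<longleftrightarrow> (\<forall>t\<in>T. t i = t (Suc i)) \<and>
      (\<exists>t\<in>T. \<exists>j. j > Suc i \<and> t i \<noteq> t j)"

definition stutter_free :: "'a team \<Rightarrow> bool" where
  "stutter_free T \<longleftrightarrow> \<not> (\<exists>i. stuttering_position T i)"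

end

theory Submission
  imports Defs
begin

definition nxt :: "'a team \<Rightarrow> nat \<Rightarrow> nat" where
  "nxt T p = (if \<exists>j>p. \<exists>t\<in>T. t j \<noteq> t p then (LEAST j. j > p \<and> (\<exists>t\<in>T. t j \<noteq> t p)) else Suc p)"

primrec red :: "'a team \<Rightarrow> nat \<Rightarrow> nat" where
  "red T 0 = 0"
| "red T (Suc k) = nxt T (red T k)"

lemma nxt_gt: "p < nxt T p"
proof (cases "\<exists>j>p. \<exists>t\<in>T. t j \<noteq> t p")
  case True
  then have "(LEAST j. j > p \<and> (\<exists>t\<in>T. t j \<noteq> t p)) > p \<and> (\<exists>t\<in>T. t (LEAST j. j > p \<and> (\<exists>t\<in>T. t j \<noteq> t p)) \<noteq> t p)"
    by (smt (verit) LeastI_ex)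
  then show ?thesis using True by (simp add: nxt_def)
next
  case False
  show ?thesis unfolding nxt_def if_not_P[OF False] by simp
qed

lemma nxt_block: "t \<in> T \<Longrightarrow> p \<le> i \<Longrightarrow> i < nxt T p \<Longrightarrow> t i = t p"
proof (cases "\<exists>j>p. \<exists>t\<in>T. t j \<noteq> t p")
  case True
  assume a: "t \<in> T" "p \<le> i" "i < nxt T p"
  show ?thesis
  proof (rule ccontr)
    assume "t i \<noteq> t p"
    then have "i > p" using a by (metis le_neq_implies_less)
    then have "(LEAST j. j > p \<and> (\<exists>t\<in>T. t j \<noteq> t p)) \<le> i"
      using a \<open>t i \<noteq> t p\<close> by (intro Least_le) blast
    then show False using a True by (simp add: nxt_def)
  qed
next
  case False
  assume a: "t \<in> T" "p \<le> i" "i < nxt T p"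
  then have "i = p" unfolding nxt_def if_not_P[OF False] by simp
  then show ?thesis by simp
qed

lemma nxt_change: "(\<exists>t\<in>T. t (nxt T p) \<noteq> t p) \<or> (\<forall>t\<in>T. \<forall>j>p. t j = t p)"
proof (cases "\<exists>j>p. \<exists>t\<in>T. t j \<noteq> t p")
  case True
  then have "(\<exists>t\<in>T. t (LEAST j. j > p \<and> (\<exists>t\<in>T. t j \<noteq> t p)) \<noteq> t p)"
    by (smt (verit) LeastI_ex)
  then show ?thesis using True by (simp add: nxt_def)
qed auto

definition red_ok :: "'a team \<Rightarrow> (nat \<Rightarrow> nat) \<Rightarrow> bool" where
  "red_ok T g \<longleftrightarrow> team_stuttering_fun T g \<and> stutter_free (team_at T g)"

definition const_from :: "'a team \<Rightarrow> nat \<Rightarrow> bool" where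
  "const_from T p \<longleftrightarrow> (\<forall>t\<in>T. \<forall>j\<ge>p. t j = t p)"

lemma block_exists:
  assumes "strict_mono (g::nat\<Rightarrow>nat)" "g 0 = 0"
  shows "\<exists>m. g m \<le> i \<and> i < g (Suc m)"
proof -
  have ex: "\<exists>m. i < g (Suc m)"
    using strict_mono_imp_increasing[OF assms(1), of "Suc i"] by (metis Suc_le_lessD)
  define m where "m = (LEAST m. i < g (Suc m))"
  have 1: "i < g (Suc m)" unfolding m_def using ex by (rule LeastI_ex)
  have 2: "g m \<le> i"
  proof (cases m)
    case 0 then show ?thesis using assms by simp
  next
    case (Suc m')
    have "\<not> i < g (Suc m')"
      using Suc m_def not_less_Least[of m' "\<lambda>m. i < g (Suc m)"] by simp
    then show ?thesis using Suc by simp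
  qed
  show ?thesis using 1 2 by blast
qed

lemma stf_block:
  assumes "stuttering_fun t g" "g k \<le> i" "i < g (Suc k)"
  shows "t i = t (g k)"
  using assms unfolding stuttering_fun_def by blast

lemma sp_at: "stuttering_position (team_at T f) k \<longleftrightarrow>
   (\<forall>t\<in>T. t (f k) = t (f (Suc k))) \<and> (\<exists>t\<in>T. \<exists>j>Suc k. t (f k) \<noteq> t (f j))"
  unfolding stuttering_position_def team_at_def trace_at_def by simp

lemma lemma_A:
  assumes "red_ok T g"
  shows "(\<exists>t\<in>T. t (g (Suc k) - 1) \<noteq> t (g (Suc k))) \<or> const_from T (g k)"
proof (cases "T = {}")
  case True then show ?thesis by (simp add: const_from_def)
next
  case False
  have st: "\<And>t. t \<in> T \<Longrightarrow> stuttering_fun t g" using assms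
    unfolding red_ok_def team_stuttering_fun_def by blast
  from False obtain t0 where "t0 \<in> T" by blast
  then have sm: "strict_mono g" "g 0 = 0" using st unfolding stuttering_fun_def by auto
  have nsp: "\<not> stuttering_position (team_at T g) k"
    using assms unfolding red_ok_def stutter_free_def by blast
  show ?thesis
  proof (cases "\<forall>t\<in>T. t (g k) = t (g (Suc k))")
    case False
    then obtain t where t: "t \<in> T" "t (g k) \<noteq> t (g (Suc k))" by blast
    have "g k < g (Suc k)" using sm(1) by (simp add: strict_mono_def)
    then have "t (g (Suc k) - 1) = t (g k)" using stf_block[OF st[OF t(1)], of k "g (Suc k) - 1"] by simp
    then show ?thesis using t by auto
  next
    case True
    then have h: "\<forall>t\<in>T. \<forall>j>Suc k. t (g k) = t (g j)"
      using nsp unfolding sp_at by blast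
    have "const_from T (g k)" unfolding const_from_def
    proof (intro ballI allI impI)
      fix t j assume t: "t \<in> T" and j: "g k \<le> j"
      obtain m where m: "g m \<le> j" "j < g (Suc m)" using block_exists[OF sm] by blast
      have "k < Suc m" using j m(2) sm(1) by (metis le_less_trans strict_mono_less)
      have "t j = t (g m)" using stf_block[OF st[OF t] m] .
      also have "\<dots> = t (g k)"
      proof -
        consider "m = k" | "m = Suc k" | "m > Suc k" using \<open>k < Suc m\<close> by linarith
        then show ?thesis using True h t by cases auto
      qed
      finally show "t j = t (g k)" .
    qed
    then show ?thesis by simp
  qed
qed

lemma lemma_U:
  assumes g: "red_ok T g" and h: "red_ok T h" and "T \<noteq> {}"
  shows "(\<forall>t\<in>T. t (g k) = t (h k)) \<and> (g k = h k \<or> (const_from T (g k) \<and> const_from T (h k)))"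
proof -
  have stg: "\<And>t. t \<in> T \<Longrightarrow> stuttering_fun t g" using g
    unfolding red_ok_def team_stuttering_fun_def by blast
  have sth: "\<And>t. t \<in> T \<Longrightarrow> stuttering_fun t h" using h
    unfolding red_ok_def team_stuttering_fun_def by blast
  from assms(3) obtain t0 where "t0 \<in> T" by blast
  then have smg: "strict_mono g" "g 0 = 0" using stg unfolding stuttering_fun_def by auto
  from \<open>t0 \<in> T\<close> have smh: "strict_mono h" "h 0 = 0" using sth unfolding stuttering_fun_def by auto
  have constcase: "(\<forall>t\<in>T. t (g (Suc k)) = t (h (Suc k))) \<and> const_from T (g (Suc k)) \<and> const_from T (h (Suc k))"
    if c: "const_from T (g k)" "const_from T (h k)" "\<forall>t\<in>T. t (g k) = t (h k)" for k
  proof -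
    have lg: "g k \<le> g (Suc k)" using smg(1) by (simp add: strict_mono_less_eq)
    have lh: "h k \<le> h (Suc k)" using smh(1) by (simp add: strict_mono_less_eq)
    have A: "\<forall>t\<in>T. t (g (Suc k)) = t (h (Suc k))"
    proof
      fix t assume t: "t \<in> T"
      have "t (g (Suc k)) = t (g k)" using c(1) t lg unfolding const_from_def by blast
      moreover have "t (h (Suc k)) = t (h k)" using c(2) t lh unfolding const_from_def by blast
      ultimately show "t (g (Suc k)) = t (h (Suc k))" using c(3) t by simp
    qed
    have B: "const_from T (g (Suc k))" unfolding const_from_def
    proof (intro ballI allI impI)
      fix t j assume t: "t \<in> T" and j: "g (Suc k) \<le> j"
      have "t j = t (g k)" using c(1) t lg j unfolding const_from_def by (meson order_trans)
      moreover have "t (g (Suc k)) = t (g k)" using c(1) t lg unfolding const_from_def by blast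
      ultimately show "t j = t (g (Suc k))" by simp
    qed
    have C: "const_from T (h (Suc k))" unfolding const_from_def
    proof (intro ballI allI impI)
      fix t j assume t: "t \<in> T" and j: "h (Suc k) \<le> j"
      have "t j = t (h k)" using c(2) t lh j unfolding const_from_def by (meson order_trans)
      moreover have "t (h (Suc k)) = t (h k)" using c(2) t lh unfolding const_from_def by blast
      ultimately show "t j = t (h (Suc k))" by simp
    qed
    show ?thesis using A B C by blast
  qed
  show ?thesis
  proof (induction k)
    case 0 then show ?case using smg smh by simp
  next
    case (Suc k)
    show ?case
    proof (cases "g k = h k")
      case False
      then have "const_from T (g k)" "const_from T (h k)" "\<forall>t\<in>T. t (g k) = t (h k)" using Suc.IH by auto
      from constcase[OF this] show ?thesis by blast
    next
      case eq: True
      show ?thesis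
      proof (cases "const_from T (g k)")
        case True
        then have "const_from T (g k)" "const_from T (h k)" "\<forall>t\<in>T. t (g k) = t (h k)" using Suc.IH eq by auto
        from constcase[OF this] show ?thesis by blast
      next
        case nc: False
        obtain t1 where t1: "t1 \<in> T" "t1 (g (Suc k) - 1) \<noteq> t1 (g (Suc k))" using lemma_A[OF g, of k] nc by blast
        obtain t2 where t2: "t2 \<in> T" "t2 (h (Suc k) - 1) \<noteq> t2 (h (Suc k))" using lemma_A[OF h, of k] nc eq by auto
        have gk: "g k < g (Suc k)" using smg(1) by (simp add: strict_mono_def)
        have hk: "h k < h (Suc k)" using smh(1) by (simp add: strict_mono_def)
        have "g (Suc k) = h (Suc k)"
        proof (rule ccontr)
          assume "g (Suc k) \<noteq> h (Suc k)"
          then consider "g (Suc k) < h (Suc k)" | "h (Suc k) < g (Suc k)" by linarith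
          then show False
          proof cases
            case 1
            have a: "t1 (g (Suc k) - 1) = t1 (h k)" by (rule stf_block[OF sth[OF t1(1)]]) (use 1 gk eq in linarith)+
            have b: "t1 (g (Suc k)) = t1 (h k)" by (rule stf_block[OF sth[OF t1(1)]]) (use 1 gk eq in linarith)+
            show False using a b t1 by simp
          next
            case 2
            have a: "t2 (h (Suc k) - 1) = t2 (g k)" by (rule stf_block[OF stg[OF t2(1)]]) (use 2 hk eq in linarith)+
            have b: "t2 (h (Suc k)) = t2 (g k)" by (rule stf_block[OF stg[OF t2(1)]]) (use 2 hk eq in linarith)+
            show False using a b t2 by simp
          qed
        qed
        then show ?thesis by simp
      qed
    qed
  qed
qed

lemma U_eq:
  assumes "red_ok T g" "red_ok T h"
  shows "team_at T g = team_at T h"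
proof (cases "T = {}")
  case True then show ?thesis by (simp add: team_at_def)
next
  case False
  have "\<And>t. t \<in> T \<Longrightarrow> trace_at t g = trace_at t h"
    using lemma_U[OF assms False] unfolding trace_at_def by auto
  then show ?thesis unfolding team_at_def by (rule image_cong[OF refl])
qed

lemma red_ok_red: "red_ok T (red T)"
proof -
  have sm: "strict_mono (red T)" unfolding strict_mono_Suc_iff by (simp add: nxt_gt)
  have st: "team_stuttering_fun T (red T)"
    unfolding team_stuttering_fun_def stuttering_fun_def
  proof (intro ballI conjI allI impI)
    fix t k i assume t: "t \<in> T" and ki: "red T k \<le> i \<and> i < red T (Suc k)"
    have "i < nxt T (red T k)" using ki by simp
    then show "t i = t (red T k)" using nxt_block[of t T "red T k" i] t ki by blast
  next
    show "strict_mono (red T)" by (rule sm)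
  next
    show "red T 0 = 0" by simp
  qed
  have sf: "stutter_free (team_at T (red T))"
    unfolding stutter_free_def
  proof
    assume "\<exists>i. stuttering_position (team_at T (red T)) i"
    then obtain k where kk: "stuttering_position (team_at T (red T)) k" by (rule exE)
    have k: "\<forall>t\<in>T. t (red T k) = t (red T (Suc k))"
       "\<exists>t\<in>T. \<exists>j>Suc k. t (red T k) \<noteq> t (red T j)"
      using kk unfolding sp_at by (rule conjunct1, rule conjunct2)
    have rs: "red T (Suc k) = nxt T (red T k)" by simp
    from nxt_change[of T "red T k"] show False
    proof
      assume "\<exists>t\<in>T. t (nxt T (red T k)) \<noteq> t (red T k)"
      then obtain t where tT: "t \<in> T" and ne: "t (nxt T (red T k)) \<noteq> t (red T k)" by (rule bexE)
      have "t (red T k) = t (red T (Suc k))" using bspec[OF k(1) tT] .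
      then show False using ne rs by simp
    next
      assume c: "\<forall>t\<in>T. \<forall>j>red T k. t j = t (red T k)"
      from k(2) obtain t j where tj: "t \<in> T" "j > Suc k" "t (red T k) \<noteq> t (red T j)" by blast
      have "red T j > red T k" using sm tj(2) by (simp add: strict_mono_less)
      then have "t (red T j) = t (red T k)" using c tj(1) by blast
      then show False using tj(3) by simp
    qed
  qed
  show ?thesis using st sf by (simp add: red_ok_def)
qed


lemma stf_free_at:
  assumes sf: "stutter_free T" and f: "team_stuttering_fun T f"
  shows "stutter_free (team_at T f)"
  unfolding stutter_free_def
proof
  assume "\<exists>k. stuttering_position (team_at T f) k"
  then obtain k where kk: "stuttering_position (team_at T f) k" by (rule exE)
  have k1: "\<forall>t\<in>T. t (f k) = t (f (Suc k))" using kk unfolding sp_at by (rule conjunct1)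
  have k2: "\<exists>t\<in>T. \<exists>j>Suc k. t (f k) \<noteq> t (f j)" using kk unfolding sp_at by (rule conjunct2)
  from k2 obtain t0 where t0T: "t0 \<in> T" and "\<exists>j>Suc k. t0 (f k) \<noteq> t0 (f j)" by (rule bexE)
  then obtain j0 where j0: "j0 > Suc k" and ne: "t0 (f k) \<noteq> t0 (f j0)" by blast
  have st: "\<And>t. t \<in> T \<Longrightarrow> stuttering_fun t f" using f unfolding team_stuttering_fun_def by (rule bspec)
  have sm: "strict_mono f" using st[OF t0T] unfolding stuttering_fun_def by (rule conjunct1)
  have lt: "f k < f (Suc k)" using sm by (simp add: strict_mono_def)
  have eq1: "\<forall>t\<in>T. t (f k) = t (Suc (f k))"
  proof
    fix t assume t: "t \<in> T"
    show "t (f k) = t (Suc (f k))"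
    proof (cases "Suc (f k) = f (Suc k)")
      case True
      have "t (f k) = t (f (Suc k))" using bspec[OF k1 t] .
      then show ?thesis using True by simp
    next
      case False
      then have "Suc (f k) < f (Suc k)" using lt by simp
      then have "t (Suc (f k)) = t (f k)" by (intro stf_block[OF st[OF t]]) simp_all
      then show ?thesis by simp
    qed
  qed
  have nsp: "\<not> stuttering_position T (f k)" using sf unfolding stutter_free_def by simp
  have all: "\<forall>t\<in>T. \<forall>j>Suc (f k). t (f k) = t j"
  proof (rule ccontr)
    assume "\<not> (\<forall>t\<in>T. \<forall>j>Suc (f k). t (f k) = t j)"
    then have "\<exists>t\<in>T. \<exists>j>Suc (f k). t (f k) \<noteq> t j" by simp
    then have "stuttering_position T (f k)" using eq1 unfolding stuttering_position_def by simp
    then show False using nsp by simp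
  qed
  have "f j0 > f (Suc k)" using sm j0 by (simp add: strict_mono_less)
  then have "f j0 > Suc (f k)" using lt by simp
  then have "t0 (f k) = t0 (f j0)" using bspec[OF all t0T] by simp
  then show False using ne by simp
qed

lemma team_at_id: "team_at T id = T"
  unfolding team_at_def trace_at_def by simp

lemma stf_id: "stuttering_fun t id"
  unfolding stuttering_fun_def
proof (intro conjI allI impI)
  show "strict_mono (id :: nat \<Rightarrow> nat)" by (simp add: strict_mono_def)
  show "id 0 = (0::nat)" by simp
  fix k i :: nat assume "id k \<le> i \<and> i < id (Suc k)"
  then have "i = k" by simp
  then show "t i = t (id k)" by simp
qed

lemma red_ok_id: "stutter_free T \<Longrightarrow> red_ok T id"
  unfolding red_ok_def team_stuttering_fun_def by (simp add: team_at_id stf_id)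

lemma part1: "stutter_free T \<Longrightarrow> team_stuttering_fun T f \<Longrightarrow> T = team_at T f"
proof -
  assume a: "stutter_free T" "team_stuttering_fun T f"
  have "red_ok T f" using a stf_free_at by (simp add: red_ok_def)
  then have "team_at T id = team_at T f" using U_eq[OF red_ok_id[OF a(1)]] by blast
  then show ?thesis by (simp add: team_at_id)
qed

lemma team_at_comp: "team_at (team_at T f) g = team_at T (f \<circ> g)"
  unfolding team_at_def trace_at_def by (auto simp: image_image)

lemma comp_stf:
  assumes f: "team_stuttering_fun T f" and g: "team_stuttering_fun (team_at T f) g"
  shows "team_stuttering_fun T (f \<circ> g)"
  unfolding team_stuttering_fun_def
proof
  fix t assume t: "t \<in> T"
  have sf: "stuttering_fun t f" using f t unfolding team_stuttering_fun_def by blast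
  have sg: "stuttering_fun (trace_at t f) g" using g t unfolding team_stuttering_fun_def team_at_def by blast
  have smf: "strict_mono f" "f 0 = 0" using sf unfolding stuttering_fun_def by auto
  have smg: "strict_mono g" "g 0 = 0" using sg unfolding stuttering_fun_def by auto
  show "stuttering_fun t (f \<circ> g)"
    unfolding stuttering_fun_def
  proof (intro conjI allI impI)
    show "strict_mono (f \<circ> g)" using smf(1) smg(1) by (simp add: strict_mono_def)
    show "(f \<circ> g) 0 = 0" using smf smg by simp
    fix k i assume ki: "(f \<circ> g) k \<le> i \<and> i < (f \<circ> g) (Suc k)"
    obtain m where m: "f m \<le> i" "i < f (Suc m)" using block_exists[OF smf] by blast
    have "g k < Suc m" using ki m smf(1) by (metis comp_apply le_less_trans strict_mono_less)
    moreover have "m < g (Suc k)" using ki m smf(1) by (metis comp_apply le_less_trans strict_mono_less)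
    ultimately have "trace_at t f m = trace_at t f (g k)" using stf_block[OF sg, of k m] by simp
    moreover have "t i = t (f m)" using stf_block[OF sf m] .
    ultimately show "t i = t ((f \<circ> g) k)" by (simp add: trace_at_def)
  qed
qed

definition nf :: "'a team \<Rightarrow> 'a team" where
  "nf T = team_at T (red T)"

lemma nf_at: assumes f: "team_stuttering_fun T f" shows "nf (team_at T f) = nf T"
proof -
  have r: "red_ok (team_at T f) (red (team_at T f))" by (rule red_ok_red)
  have "team_stuttering_fun T (f \<circ> red (team_at T f))"
    using comp_stf[OF f] r by (simp add: red_ok_def)
  moreover have "team_at T (f \<circ> red (team_at T f)) = nf (team_at T f)"
    by (simp add: nf_def team_at_comp)
  ultimately have "red_ok T (f \<circ> red (team_at T f))"
    using r by (simp add: red_ok_def nf_def)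
  then have "team_at T (f \<circ> red (team_at T f)) = nf T"
    using U_eq red_ok_red unfolding nf_def by blast
  then show ?thesis using \<open>team_at T (f \<circ> red (team_at T f)) = nf (team_at T f)\<close> by simp
qed

lemma equiv_iff: "stutter_equiv T T' \<longleftrightarrow> nf T = nf T'"
proof
  assume "stutter_equiv T T'"
  then obtain f f' where "team_stuttering_fun T f" "team_stuttering_fun T' f'" "team_at T f = team_at T' f'"
    unfolding stutter_equiv_def by blast
  then show "nf T = nf T'" using nf_at by metis
next
  assume "nf T = nf T'"
  then show "stutter_equiv T T'" unfolding stutter_equiv_def nf_def
    using red_ok_red unfolding red_ok_def by blast
qed

lemma nf_free: "stutter_free (nf T)"
  using red_ok_red unfolding red_ok_def nf_def by blast

lemma nf_nf: "nf (nf T) = nf T"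
  using nf_at red_ok_red unfolding red_ok_def nf_def by blast

lemma nf_of_free: "stutter_free S \<Longrightarrow> nf S = S"
  using part1 red_ok_red unfolding red_ok_def nf_def by metis

theorem mainTheorem6:
  shows "(\<forall>(T::'a team) f. stutter_free T \<and> team_stuttering_fun T f \<longrightarrow> T = team_at T f)
    \<and> (\<forall>T::'a team. \<exists>!T'. stutter_free T' \<and> stutter_equiv T T')
    \<and> (\<forall>T::'a team. stutter_equiv T T)
    \<and> (\<forall>T T'::'a team. stutter_equiv T T' \<longrightarrow> stutter_equiv T' T)
    \<and> (\<forall>T T' T''::'a team. stutter_equiv T T' \<and> stutter_equiv T' T'' \<longrightarrow> stutter_equiv T T'')
    \<and> (\<forall>T::'a team. \<exists>!S. S \<in> {U. stutter_equiv T U} \<and> stutter_free S)"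
proof (intro conjI allI impI)
  show "\<And>T f. stutter_free T \<and> team_stuttering_fun T f \<Longrightarrow> T = team_at T f" using part1 by blast
  fix T :: "'a team"
  show "\<exists>!T'. stutter_free T' \<and> stutter_equiv T T'"
  proof (rule ex1I[of _ "nf T"])
    show "stutter_free (nf T) \<and> stutter_equiv T (nf T)" by (simp add: nf_free equiv_iff nf_nf)
    show "\<And>y. stutter_free y \<and> stutter_equiv T y \<Longrightarrow> y = nf T" by (simp add: equiv_iff nf_of_free)
  qed
  show "\<exists>!S. S \<in> {U. stutter_equiv T U} \<and> stutter_free S"
  proof (rule ex1I[of _ "nf T"])
    show "nf T \<in> {U. stutter_equiv T U} \<and> stutter_free (nf T)" by (simp add: nf_free equiv_iff nf_nf)
    show "\<And>y. y \<in> {U. stutter_equiv T U} \<and> stutter_free y \<Longrightarrow> y = nf T" by (simp add: equiv_iff nf_of_free)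
  qed
  show "stutter_equiv T T" by (simp add: equiv_iff)
next
  fix T T' :: "'a team"
  show "stutter_equiv T T' \<Longrightarrow> stutter_equiv T' T" by (simp add: equiv_iff)
next
  fix T T' T'' :: "'a team"
  show "stutter_equiv T T' \<and> stutter_equiv T' T'' \<Longrightarrow> stutter_equiv T T''" by (simp add: equiv_iff)
qed

end
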